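(* (a) If $x,y\in I$, then $xy\in I$ and $yx\in I$. (b) If $x,y\in\beta\mathbb{N}$ with $x\in I$ and $y\notin I$, then $xy\in I$ and $yx\in I$.
   Context: $\mathbb{N}=\{1,2,3,\dots\}$; $\beta\mathbb{N}$ is the set of ultrafilters on $\mathbb{N}$ (Stone–Čech compactification, naturals identified with principal ultrafilters), with multiplication: $A\in xy$ iff $\{n\in\mathbb{N}:A/n\in y\}\in x$, where $A/n=\{m:mn\in A\}$. For $A\subseteq\mathbb{N}$, $\overline{A}=\{x\in\beta\mathbb{N}:A\in x\}$. $P$ is the set of primes, $L_0=\{1\}$, $L_n=\{a_1\cdots a_n:a_i\in P\}$. $I=\bigcap_{i=0}^\infty\overline{\mathbb{N}\setminus L_i}$ (ultrafilters containing none of the $L_i$). *)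

theory Defs
  imports "HOL-Computational_Algebra.Primes"
begin

definition Npos :: "nat set" where "Npos = {1..}"

definition is_ultrafilter :: "nat set set \<Rightarrow> bool" where
  "is_ultrafilter U \<longleftrightarrow>
     U \<subseteq> Pow Npos \<and> Npos \<in> U \<and> {} \<notin> U \<and>
     (\<forall>A B. A \<in> U \<and> B \<in> U \<longrightarrow> A \<inter> B \<in> U) \<and>
     (\<forall>A B. A \<in> U \<and> A \<subseteq> B \<and> B \<subseteq> Npos \<longrightarrow> B \<in> U) \<and>
     (\<forall>A. A \<subseteq> Npos \<longrightarrow> A \<in> U \<or> Npos - A \<in> U)"

definition betaN :: "nat set set set" where
  "betaN = {U. is_ultrafilter U}"

definition divset :: "nat set \<Rightarrow> nat \<Rightarrow> nat set" where
  "divset A n = {m \<in> Npos. m * n \<in> A}"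

definition umult :: "nat set set \<Rightarrow> nat set set \<Rightarrow> nat set set" where
  "umult x y = {A. A \<subseteq> Npos \<and> {n \<in> Npos. divset A n \<in> y} \<in> x}"

text \<open>L_n: products of exactly n primes (with repetition); L_0 = {1}.\<close>
definition Lset :: "nat \<Rightarrow> nat set" where
  "Lset k = {m. \<exists>ps. length ps = k \<and> (\<forall>p\<in>set ps. prime p) \<and> m = prod_list ps}"

definition ucl :: "nat set \<Rightarrow> nat set set set" where
  "ucl A = {x \<in> betaN. A \<in> x}"

definition Iset :: "nat set set set" where
  "Iset = (\<Inter>i. ucl (Npos - Lset i))"

end

theory Submission
  imports Defs
begin

definition Om :: "nat \<Rightarrow> nat" where "Om n = size (prime_factorization n)"

lemma Lset_char: "Lset k = {n. n > 0 \<and> Om n = k}"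
proof (intro set_eqI iffI)
  fix n assume "n \<in> Lset k"
  then obtain ps where ps: "length ps = k" "\<forall>p\<in>set ps. prime p" "n = prod_list ps"
    unfolding Lset_def by blast
  have pr: "prod_list ps = prod_mset (mset ps)" by (simp add: prod_mset_prod_list)
  have "prime_factorization (prod_mset (mset ps)) = mset ps"
    using ps(2) by (intro prime_factorization_prod_mset_primes) auto
  moreover have "n > 0" using ps(2,3) by (metis less_numeral_extra(3) neq0_conv prime_gt_0_nat prod_list_zero_iff)
  ultimately show "n \<in> {n. n > 0 \<and> Om n = k}" using ps pr by (simp add: Om_def)
next
  fix n assume "n \<in> {n. n > 0 \<and> Om n = k}"
  hence n: "n > 0" "Om n = k" by auto
  obtain ps where ps: "mset ps = prime_factorization n" using ex_mset by blast
  have "length ps = k" using n ps by (metis Om_def size_mset)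
  moreover have "\<forall>p\<in>set ps. prime p" using ps
    by (metis in_prime_factors_imp_prime set_mset_mset)
  moreover have "n = prod_list ps"
    using ps n by (metis prod_mset_prime_factorization_nat prod_mset_prod_list)
  ultimately show "n \<in> Lset k" unfolding Lset_def by blast
qed

lemma Om_mult: "m > 0 \<Longrightarrow> n > 0 \<Longrightarrow> Om (m * n) = Om m + Om n"
  by (simp add: Om_def prime_factorization_mult)

lemma Lset_sub: "Lset k \<subseteq> Npos"
  by (auto simp: Lset_char Npos_def)

lemma uf_compl: "is_ultrafilter U \<Longrightarrow> D \<subseteq> Npos \<Longrightarrow> (Npos - D \<in> U) \<longleftrightarrow> D \<notin> U"
proof
  assume u: "is_ultrafilter U" and d: "D \<subseteq> Npos" and c: "Npos - D \<in> U"
  show "D \<notin> U"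
  proof
    assume "D \<in> U"
    hence "D \<inter> (Npos - D) \<in> U" using u c unfolding is_ultrafilter_def by blast
    moreover have "D \<inter> (Npos - D) = {}" by blast
    ultimately show False using u unfolding is_ultrafilter_def by simp
  qed
next
  assume "is_ultrafilter U" "D \<subseteq> Npos" "D \<notin> U"
  thus "Npos - D \<in> U" unfolding is_ultrafilter_def by blast
qed

lemma uf_union: "is_ultrafilter U \<Longrightarrow> A \<subseteq> Npos \<Longrightarrow> B \<subseteq> Npos \<Longrightarrow> A \<union> B \<in> U \<Longrightarrow> A \<in> U \<or> B \<in> U"
proof (rule ccontr)
  assume u: "is_ultrafilter U" and s: "A \<subseteq> Npos" "B \<subseteq> Npos" "A \<union> B \<in> U" and n: "\<not> (A \<in> U \<or> B \<in> U)"
  have "Npos - A \<in> U" "Npos - B \<in> U" using uf_compl[OF u] s n by auto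
  hence "(Npos - A) \<inter> (Npos - B) \<in> U" using u unfolding is_ultrafilter_def by blast
  hence "((Npos - A) \<inter> (Npos - B)) \<inter> (A \<union> B) \<in> U" using u s unfolding is_ultrafilter_def by blast
  moreover have "((Npos - A) \<inter> (Npos - B)) \<inter> (A \<union> B) = {}" by blast
  ultimately show False using u unfolding is_ultrafilter_def by simp
qed

lemma uf_mono: "is_ultrafilter U \<Longrightarrow> A \<in> U \<Longrightarrow> A \<subseteq> B \<Longrightarrow> B \<subseteq> Npos \<Longrightarrow> B \<in> U"
  unfolding is_ultrafilter_def by blast

lemma divset_Npos: "n \<in> Npos \<Longrightarrow> divset Npos n = Npos"
  by (auto simp: divset_def Npos_def)

lemma divset_compl: "n \<in> Npos \<Longrightarrow> divset (Npos - A) n = Npos - divset A n"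
  by (auto simp: divset_def Npos_def)

lemma uf_top: "is_ultrafilter U \<Longrightarrow> Npos \<in> U" unfolding is_ultrafilter_def by (elim conjE)
lemma uf_empty: "is_ultrafilter U \<Longrightarrow> {} \<notin> U" unfolding is_ultrafilter_def by (elim conjE)
lemma uf_int: "is_ultrafilter U \<Longrightarrow> A \<in> U \<Longrightarrow> B \<in> U \<Longrightarrow> A \<inter> B \<in> U" unfolding is_ultrafilter_def by (elim conjE) simp
lemma uf_sub: "is_ultrafilter U \<Longrightarrow> A \<in> U \<Longrightarrow> A \<subseteq> Npos" unfolding is_ultrafilter_def by (elim conjE) auto

lemma umult_mem: "A \<in> umult x y \<longleftrightarrow> A \<subseteq> Npos \<and> {n \<in> Npos. divset A n \<in> y} \<in> x"
  unfolding umult_def by simp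

lemma umult_uf:
  assumes x: "is_ultrafilter x" and y: "is_ultrafilter y"
  shows "is_ultrafilter (umult x y)"
proof -
  have D: "{n \<in> Npos. divset A n \<in> y} \<subseteq> Npos" for A by auto
  have a1: "umult x y \<subseteq> Pow Npos" unfolding umult_def by auto
  have "{n \<in> Npos. divset Npos n \<in> y} = Npos"
    using uf_top[OF y] divset_Npos by auto
  hence a2: "Npos \<in> umult x y" using uf_top[OF x] umult_mem by auto
  have "divset {} n = {}" for n unfolding divset_def by simp
  hence "{n \<in> Npos. divset {} n \<in> y} = {}"
    using uf_empty[OF y] by simp
  hence a3: "{} \<notin> umult x y" using uf_empty[OF x] umult_mem by metis
  have a4: "A \<inter> B \<in> umult x y" if "A \<in> umult x y" "B \<in> umult x y" for A B
  proof -
    have "{n \<in> Npos. divset (A \<inter> B) n \<in> y} = {n \<in> Npos. divset A n \<in> y} \<inter> {n \<in> Npos. divset B n \<in> y}"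
    proof -
      have "divset (A \<inter> B) n = divset A n \<inter> divset B n" for n by (auto simp: divset_def)
      moreover have "divset A n \<inter> divset B n \<in> y \<longleftrightarrow> divset A n \<in> y \<and> divset B n \<in> y" for n
      proof
        assume h: "divset A n \<inter> divset B n \<in> y"
        have "divset A n \<subseteq> Npos" "divset B n \<subseteq> Npos" by (auto simp: divset_def)
        thus "divset A n \<in> y \<and> divset B n \<in> y" using uf_mono[OF y h] by blast
      next
        assume "divset A n \<in> y \<and> divset B n \<in> y"
        thus "divset A n \<inter> divset B n \<in> y" using uf_int[OF y] by blast
      qed
      ultimately show ?thesis by auto
    qed
    moreover have "A \<inter> B \<subseteq> Npos" using that by (auto simp: umult_mem)
    moreover have "{n \<in> Npos. divset A n \<in> y} \<in> x" "{n \<in> Npos. divset B n \<in> y} \<in> x"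
      using that by (simp_all add: umult_mem)
    ultimately show ?thesis using uf_int[OF x] by (simp add: umult_mem)
  qed
  have a5: "B \<in> umult x y" if "A \<in> umult x y" "A \<subseteq> B" "B \<subseteq> Npos" for A B
  proof -
    have "{n \<in> Npos. divset A n \<in> y} \<subseteq> {n \<in> Npos. divset B n \<in> y}"
    proof
      fix n assume "n \<in> {n \<in> Npos. divset A n \<in> y}"
      moreover have "divset A n \<subseteq> divset B n" "divset B n \<subseteq> Npos" using that by (auto simp: divset_def)
      ultimately show "n \<in> {n \<in> Npos. divset B n \<in> y}" using uf_mono[OF y] by blast
    qed
    moreover have "{n \<in> Npos. divset A n \<in> y} \<in> x" using that(1) by (simp add: umult_mem)
    ultimately show ?thesis using that(3) uf_mono[OF x _ _ D] by (simp add: umult_mem)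
  qed
  have a6: "A \<in> umult x y \<or> Npos - A \<in> umult x y" if "A \<subseteq> Npos" for A
  proof -
    have "{n \<in> Npos. divset (Npos - A) n \<in> y} = Npos - {n \<in> Npos. divset A n \<in> y}"
    proof -
      have "divset (Npos - A) n \<in> y \<longleftrightarrow> divset A n \<notin> y" if "n \<in> Npos" for n
        using divset_compl[OF that] uf_compl[OF y, of "divset A n"] by (simp add: divset_def)
      thus ?thesis by auto
    qed
    hence "{n \<in> Npos. divset (Npos - A) n \<in> y} \<in> x \<longleftrightarrow> {n \<in> Npos. divset A n \<in> y} \<notin> x"
      using uf_compl[OF x D] by simp
    thus ?thesis using that by (simp add: umult_mem)
  qed
  have a4': "\<forall>A B. A \<in> umult x y \<and> B \<in> umult x y \<longrightarrow> A \<inter> B \<in> umult x y"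
    using a4 by simp
  have a5': "\<forall>A B. A \<in> umult x y \<and> A \<subseteq> B \<and> B \<subseteq> Npos \<longrightarrow> B \<in> umult x y"
    using a5 by metis
  have a6': "\<forall>A. A \<subseteq> Npos \<longrightarrow> A \<in> umult x y \<or> Npos - A \<in> umult x y"
    using a6 by simp
  show ?thesis unfolding is_ultrafilter_def using a1 a2 a3 a4' a5' a6' by (intro conjI)

qed

lemma Iset_char: "x \<in> Iset \<longleftrightarrow> is_ultrafilter x \<and> (\<forall>k. Lset k \<notin> x)"
proof
  assume "x \<in> Iset"
  hence h: "\<And>i. x \<in> ucl (Npos - Lset i)" unfolding Iset_def by blast
  hence u: "is_ultrafilter x" using h[of 0] unfolding ucl_def betaN_def by blast
  have "Lset k \<notin> x" for k using h[of k] uf_compl[OF u Lset_sub] unfolding ucl_def by blast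
  thus "is_ultrafilter x \<and> (\<forall>k. Lset k \<notin> x)" using u by blast
next
  assume a: "is_ultrafilter x \<and> (\<forall>k. Lset k \<notin> x)"
  have "x \<in> ucl (Npos - Lset i)" for i using a uf_compl[of x "Lset i", OF _ Lset_sub]
    unfolding ucl_def betaN_def by blast
  thus "x \<in> Iset" unfolding Iset_def by blast
qed

definition T :: "nat \<Rightarrow> nat set" where "T k = {n \<in> Npos. Om n \<le> k}"

lemma T_notin: assumes "x \<in> Iset" shows "T k \<notin> x"
proof (induction k)
  case 0
  have "T 0 = Lset 0" by (auto simp: T_def Lset_char Npos_def)
  then show ?case using assms by (simp add: Iset_char)
next
  case (Suc k)
  have "T (Suc k) = T k \<union> Lset (Suc k)" by (auto simp: T_def Lset_char Npos_def)
  moreover have "T k \<subseteq> Npos" by (auto simp: T_def)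
  moreover have "is_ultrafilter x" "Lset (Suc k) \<notin> x" using assms by (simp_all add: Iset_char)
  ultimately show ?case using uf_union[of x "T k" "Lset (Suc k)", OF _ _ Lset_sub] Suc.IH by metis
qed

lemma main:
  assumes x: "x \<in> Iset" and y: "is_ultrafilter y"
  shows "umult x y \<in> Iset \<and> umult y x \<in> Iset"
proof -
  have xu: "is_ultrafilter x" using x by (simp add: Iset_char)
  have dv: "m \<in> divset (Lset k) n \<Longrightarrow> n \<in> Npos \<Longrightarrow> Om m + Om n = k \<and> m > 0" for m n k
    by (auto simp: divset_def Lset_char Npos_def Om_mult)
  have "Lset k \<notin> umult x y" for k
  proof
    assume "Lset k \<in> umult x y"
    hence S: "{n \<in> Npos. divset (Lset k) n \<in> y} \<in> x" by (simp add: umult_def)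
    have "{n \<in> Npos. divset (Lset k) n \<in> y} \<subseteq> T k"
    proof
      fix n assume n: "n \<in> {n \<in> Npos. divset (Lset k) n \<in> y}"
      hence "divset (Lset k) n \<noteq> {}" using uf_empty[OF y] by auto
      then obtain m where "m \<in> divset (Lset k) n" by auto
      hence "Om m + Om n = k" using dv[of m k n] n by blast
      thus "n \<in> T k" using n by (auto simp: T_def)
    qed
    moreover have "T k \<subseteq> Npos" by (auto simp: T_def)
    ultimately have "T k \<in> x" using uf_mono[OF xu S] by blast
    thus False using T_notin[OF x] by blast
  qed
  hence 1: "umult x y \<in> Iset" using umult_uf[OF xu y] by (simp add: Iset_char)
  have "Lset k \<notin> umult y x" for k
  proof
    assume "Lset k \<in> umult y x"
    hence S: "{n \<in> Npos. divset (Lset k) n \<in> x} \<in> y" by (simp add: umult_def)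
    have "{n \<in> Npos. divset (Lset k) n \<in> x} = {}"
    proof (rule ccontr)
      assume "{n \<in> Npos. divset (Lset k) n \<in> x} \<noteq> {}"
      then obtain n where n: "n \<in> Npos" "divset (Lset k) n \<in> x" by auto
      have "divset (Lset k) n \<subseteq> Lset (k - Om n)"
      proof
        fix m assume "m \<in> divset (Lset k) n"
        from dv[OF this n(1)] show "m \<in> Lset (k - Om n)" by (auto simp: Lset_char)
      qed
      hence "Lset (k - Om n) \<in> x" using uf_mono[OF xu n(2) _ Lset_sub] by blast
      thus False using x by (simp add: Iset_char)
    qed
    thus False using S uf_empty[OF y] by metis
  qed
  hence 2: "umult y x \<in> Iset" using umult_uf[OF y xu] by (simp add: Iset_char)
  show ?thesis using 1 2 by auto
qed

theorem theorem3p7: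
  shows "(\<forall>x y. x \<in> Iset \<and> y \<in> Iset \<longrightarrow> umult x y \<in> Iset \<and> umult y x \<in> Iset)
     \<and> (\<forall>x y. x \<in> betaN \<and> y \<in> betaN \<and> x \<in> Iset \<and> y \<notin> Iset
             \<longrightarrow> umult x y \<in> Iset \<and> umult y x \<in> Iset)"
proof -
  have "y \<in> Iset \<Longrightarrow> is_ultrafilter y" for y by (simp add: Iset_char)
  thus ?thesis using main by (simp add: betaN_def)
qed

end
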